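(* Let $(M,\mathcal F)$ be transversely Hessian with foliated Hessian structure $(D,g)$ and second normal Koszul form $\beta$. For any adapted foliated affine coordinate system $(x^1,\dots,x^p,y^1,\dots,y^q)$, let $\mathbf R^N_{i\bar j}$ ($i,j=1,\dots,q$) be the components of the normal Ricci tensor of the normal Kählerian metric $g^N$ of the foliated manifold $(N(M,\mathcal F),\mathcal F^N)$ with respect to the complex coordinates $z^i,\bar z^j$. Then $\mathbf R^N_{i\bar j}=-\frac12\beta_{ij}\circ\pi$, where $\pi:N(M,\mathcal F)\to M$ is the projection.
   Context: $N(M,\mathcal F)=TM/T\mathcal F$, $\mathcal F$ of codimension $q$. $(D,g)$: $D$ a flat torsion-free foliated connection in the normal bundle (adapted foliated affine coordinates: adapted charts with affine transverse coordinate changes and $\overline{\partial/\partial y^i}$ $D$-parallel), $g$ a foliated metric in the normal bundle with locally $g_{ij}=\partial^2h/\partial y^i\partial y^j$, $h$ a function of $y$ only. Normal volume form $\omega=(\det g_{kl})^{1/2}dy^1\wedge\dots\wedge dy^q$; first Koszul form $\alpha$: $D_X\omega=\alpha(X)\omega$; second Koszul form $\beta=D\alpha$, $\beta_{ij}=\partial\alpha_i/\partial y^j$. On $N(M,\mathcal F)$ with fibre coordinates $\xi^i=dy^i$, $\mathcal F^N$ has plaques $\{(y,\xi)=\mathrm{const}\}$, $z^i=y^i+\sqrt{-1}\xi^i$ are transversely holomorphic coordinates and $g^N=\sum(g_{ij}\circ\pi)dz^id\bar z^j$ is a foliated Kähler metric; its normal Ricci tensor is the Ricci tensor of the corresponding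 transverse Kähler metric. *)

theory Defs
  imports "HOL-Analysis.Analysis"
begin

definition rpartial :: "'n::finite \<Rightarrow> (real^'n \<Rightarrow> real) \<Rightarrow> real^'n \<Rightarrow> real" where
  "rpartial i f y = deriv (\<lambda>t. f (y + axis i t)) 0"

fun iter_partial :: "'n::finite list \<Rightarrow> (real^'n \<Rightarrow> real) \<Rightarrow> real^'n \<Rightarrow> real" where
  "iter_partial [] f = f"
| "iter_partial (i # is) f = rpartial i (iter_partial is f)"

definition smooth_on :: "(real^'n::finite) set \<Rightarrow> (real^'n \<Rightarrow> real) \<Rightarrow> bool" where
  "smooth_on U f \<longleftrightarrow>
     (\<forall>is. continuous_on U (iter_partial is f) \<and>
        (\<forall>y\<in>U. \<forall>i. (\<lambda>t. iter_partial is f (y + axis i t)) differentiable (at 0)))"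

definition hess_metric :: "(real^'n::finite \<Rightarrow> real) \<Rightarrow> real^'n \<Rightarrow> real^'n^'n" where
  "hess_metric h y = (\<chi> i j. rpartial i (rpartial j h) y)"

definition pos_def :: "real^'n::finite^'n \<Rightarrow> bool" where
  "pos_def A \<longleftrightarrow> (\<forall>v. v \<noteq> 0 \<longrightarrow> (\<Sum>i\<in>UNIV. \<Sum>j\<in>UNIV. v$i * A$i$j * v$j) > 0)"

text \<open>Coefficient of the normal volume form omega = (det g)^(1/2) dy^1 ^ ... ^ dy^q.\<close>
definition vol_coeff :: "(real^'n::finite \<Rightarrow> real) \<Rightarrow> real^'n \<Rightarrow> real" where
  "vol_coeff h y = sqrt (det (hess_metric h y))"

text \<open>First Koszul form: D_X omega = alpha(X) omega. Since dy^1 ^...^ dy^q is D-parallel,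
  D_{d/dy^i} omega = (d/dy^i of the coefficient) dy^1^..^dy^q, hence alpha_i is:\<close>
definition koszul_alpha :: "(real^'n::finite \<Rightarrow> real) \<Rightarrow> 'n \<Rightarrow> real^'n \<Rightarrow> real" where
  "koszul_alpha h i y = rpartial i (vol_coeff h) y / vol_coeff h y"

text \<open>Second Koszul form beta = D alpha, beta_ij = d alpha_i / dy^j.\<close>
definition koszul_beta :: "(real^'n::finite \<Rightarrow> real) \<Rightarrow> 'n \<Rightarrow> 'n \<Rightarrow> real^'n \<Rightarrow> real" where
  "koszul_beta h i j y = rpartial j (koszul_alpha h i) y"

definition re_vec :: "complex^'n::finite \<Rightarrow> real^'n" where
  "re_vec z = (\<chi> i. Re (z$i))"

definition cvec :: "real^'n::finite \<Rightarrow> real^'n \<Rightarrow> complex^'n" where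
  "cvec y \<xi> = (\<chi> i. Complex (y$i) (\<xi>$i))"

definition dRe :: "'n::finite \<Rightarrow> (complex^'n \<Rightarrow> complex) \<Rightarrow> complex^'n \<Rightarrow> complex" where
  "dRe i F z = vector_derivative (\<lambda>t::real. F (z + axis i (complex_of_real t))) (at 0)"

definition dIm :: "'n::finite \<Rightarrow> (complex^'n \<Rightarrow> complex) \<Rightarrow> complex^'n \<Rightarrow> complex" where
  "dIm i F z = vector_derivative (\<lambda>t::real. F (z + axis i (\<i> * complex_of_real t))) (at 0)"

definition dz :: "'n::finite \<Rightarrow> (complex^'n \<Rightarrow> complex) \<Rightarrow> complex^'n \<Rightarrow> complex" where
  "dz i F z = (dRe i F z - \<i> * dIm i F z) / 2"

definition dzb :: "'n::finite \<Rightarrow> (complex^'n \<Rightarrow> complex) \<Rightarrow> complex^'n \<Rightarrow> complex" where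
  "dzb i F z = (dRe i F z + \<i> * dIm i F z) / 2"

text \<open>Coefficients g_{i jbar} of the normal Kaehler metric g^N = sum (g_ij o pi) dz^i dzbar^j.\<close>
definition kahler_coeff :: "(real^'n::finite \<Rightarrow> real) \<Rightarrow> complex^'n \<Rightarrow> complex^'n^'n" where
  "kahler_coeff h z = (\<chi> i j. complex_of_real (hess_metric h (re_vec z) $ i $ j))"

text \<open>Curvature of a Kaehler metric G (G z $ i $ j = g_{i jbar}) with
  g^{p qbar} = (matrix_inv G) $ q $ p, so that sum_q g^{p qbar} g_{r qbar} = delta_pr:
  R_{i jbar k lbar} = - d_k d_lbar g_{i jbar} + g^{p qbar} d_k g_{i qbar} d_lbar g_{p jbar}.\<close>
definition kahler_curv ::
  "(complex^'n::finite \<Rightarrow> complex^'n^'n) \<Rightarrow> 'n \<Rightarrow> 'n \<Rightarrow> 'n \<Rightarrow> 'n \<Rightarrow> complex^'n \<Rightarrow> complex" where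
  "kahler_curv G i j k l z =
     - dz k (dzb l (\<lambda>w. G w $ i $ j)) z
     + (\<Sum>p\<in>UNIV. \<Sum>q\<in>UNIV. matrix_inv (G z) $ q $ p
            * dz k (\<lambda>w. G w $ i $ q) z * dzb l (\<lambda>w. G w $ p $ j) z)"

definition kahler_ricci ::
  "(complex^'n::finite \<Rightarrow> complex^'n^'n) \<Rightarrow> 'n \<Rightarrow> 'n \<Rightarrow> complex^'n \<Rightarrow> complex" where
  "kahler_ricci G k l z =
     (\<Sum>i\<in>UNIV. \<Sum>j\<in>UNIV. matrix_inv (G z) $ j $ i * kahler_curv G i j k l z)"

end

theory Submission
  imports Defs
begin


definition hp :: "(real^'n::finite \<Rightarrow> real) \<Rightarrow> real^'n \<Rightarrow> 'n \<Rightarrow> bool" where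
  "hp f y i \<longleftrightarrow> (\<lambda>t. f (y + axis i t)) differentiable (at 0)"

lemma axis_add_real: "axis i (s + t) = axis i s + (axis i t :: real^'n::finite)"
  by (simp add: axis_def vec_eq_iff)

lemma norm_axis_real: "norm (axis i (t::real) :: real^'n::finite) = \<bar>t\<bar>"
proof -
  have "axis i t = t *\<^sub>R (axis i 1 :: real^'n)" by (simp add: axis_def vec_eq_iff)
  then show ?thesis by simp
qed

lemma hp_deriv0:
  assumes "hp f y i"
  shows "((\<lambda>t. f (y + axis i t)) has_real_derivative rpartial i f y) (at 0)"
  using assms unfolding hp_def rpartial_def
  by (simp add: DERIV_deriv_iff_real_differentiable)

lemma hp_deriv:
  assumes "hp f (y + axis i s) i"
  shows "((\<lambda>t. f (y + axis i t)) has_real_derivative rpartial i f (y + axis i s)) (at s)"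
proof -
  have "((\<lambda>t. f ((y + axis i s) + axis i t)) has_real_derivative rpartial i f (y + axis i s)) (at 0)"
    by (rule hp_deriv0[OF assms])
  moreover have "(\<lambda>t. f ((y + axis i s) + axis i t)) = (\<lambda>t. f (y + axis i (t + s)))"
    by (simp add: axis_add_real algebra_simps)
  ultimately show ?thesis using DERIV_shift[of "\<lambda>t. f (y + axis i t)" _ 0 s] by simp
qed

lemma ev_axis_in:
  assumes "open U" "y \<in> U"
  shows "eventually (\<lambda>t. y + axis i t \<in> U) (nhds (0::real))"
proof -
  obtain r where r: "r > 0" "ball y r \<subseteq> U" using assms open_contains_ball by blast
  have "eventually (\<lambda>t. t \<in> ball 0 r) (nhds (0::real))"
    using r by (intro eventually_nhds_in_open) auto
  then show ?thesis
  proof (rule eventually_mono)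
    fix t :: real assume "t \<in> ball 0 r"
    then have "dist y (y + axis i t) < r" by (simp add: dist_norm norm_axis_real)
    then show "y + axis i t \<in> U" using r by auto
  qed
qed

lemma rpartial_local:
  assumes "open U" "y \<in> U" "\<And>x. x \<in> U \<Longrightarrow> f x = g x"
  shows "rpartial i f y = rpartial i g y"
  unfolding rpartial_def
  by (rule deriv_cong_ev) (use ev_axis_in[OF assms(1,2), of i] assms(3) in \<open>auto elim: eventually_mono\<close>)

lemma smooth_cont: "smooth_on U h \<Longrightarrow> continuous_on U (iter_partial is h)"
  by (simp add: smooth_on_def)

lemma smooth_hp: "smooth_on U h \<Longrightarrow> y \<in> U \<Longrightarrow> hp (iter_partial is h) y i"
  by (simp add: smooth_on_def hp_def)


lemma axis_zero_real: "axis i (0::real) = (0::real^'n::finite)"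
  by (simp add: axis_def vec_eq_iff)

lemma mvt_partial:
  assumes "t > 0" "\<And>s. 0 \<le> s \<Longrightarrow> s \<le> t \<Longrightarrow> hp f (x + axis i s) i"
  shows "\<exists>\<sigma>. 0 < \<sigma> \<and> \<sigma> < t \<and> f (x + axis i t) - f x = t * rpartial i f (x + axis i \<sigma>)"
proof -
  have "\<exists>z. 0 < z \<and> z < t \<and> (f (x + axis i t) - f (x + axis i 0) = (t - 0) * rpartial i f (x + axis i z))"
  proof (rule MVT2)
    fix s :: real assume "0 \<le> s" "s \<le> t"
    then show "((\<lambda>s. f (x + axis i s)) has_real_derivative rpartial i f (x + axis i s)) (at s)"
      by (intro hp_deriv assms(2))
  qed (use assms in auto)
  then show ?thesis by (auto simp: axis_zero_real)
qed

lemma dd: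
  assumes "s > 0"
    and sq: "\<And>u v. 0 \<le> u \<Longrightarrow> u \<le> s \<Longrightarrow> 0 \<le> v \<Longrightarrow> v \<le> s \<Longrightarrow> y + axis a u + axis b v \<in> U"
    and hf: "\<And>x i. x \<in> U \<Longrightarrow> hp f x i"
    and hfa: "\<And>x i. x \<in> U \<Longrightarrow> hp (rpartial a f) x i"
  shows "\<exists>u v. 0 < u \<and> u < s \<and> 0 < v \<and> v < s \<and>
     f (y + axis a s + axis b s) - f (y + axis a s) - f (y + axis b s) + f y
       = s\<^sup>2 * rpartial b (rpartial a f) (y + axis a u + axis b v)"
proof -
  have in0: "y + axis a u \<in> U" if "0 \<le> u" "u \<le> s" for u
    using sq[of u 0] that assms(1) by (simp add: axis_zero_real)
  have ins: "y + axis b s + axis a u \<in> U" if "0 \<le> u" "u \<le> s" for u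
    using sq[of u s] that assms(1) by (simp add: algebra_simps)
  have "\<exists>z. 0 < z \<and> z < s \<and>
     ((\<lambda>u. f (y + axis b s + axis a u) - f (y + axis a u)) s - (\<lambda>u. f (y + axis b s + axis a u) - f (y + axis a u)) 0
      = (s - 0) * (rpartial a f (y + axis b s + axis a z) - rpartial a f (y + axis a z)))"
  proof (rule MVT2)
    fix x :: real assume x: "0 \<le> x" "x \<le> s"
    show "((\<lambda>u. f (y + axis b s + axis a u) - f (y + axis a u)) has_real_derivative
       rpartial a f (y + axis b s + axis a x) - rpartial a f (y + axis a x)) (at x)"
      by (intro DERIV_diff hp_deriv hf ins in0 x)
  qed (use assms in auto)
  then obtain u where u: "0 < u" "u < s"
    and eq1: "f (y + axis b s + axis a s) - f (y + axis a s) - (f (y + axis b s + axis a 0) - f (y + axis a 0))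
        = s * (rpartial a f (y + axis b s + axis a u) - rpartial a f (y + axis a u))" by auto
  have "\<exists>\<sigma>. 0 < \<sigma> \<and> \<sigma> < s \<and> rpartial a f ((y + axis a u) + axis b s) - rpartial a f (y + axis a u)
      = s * rpartial b (rpartial a f) ((y + axis a u) + axis b \<sigma>)"
    by (rule mvt_partial) (use assms u in \<open>auto intro!: hfa sq\<close>)
  then obtain v where v: "0 < v" "v < s" and eq2: "rpartial a f ((y + axis a u) + axis b s) - rpartial a f (y + axis a u)
      = s * rpartial b (rpartial a f) ((y + axis a u) + axis b v)" by auto
  define X where "X = rpartial b (rpartial a f) ((y + axis a u) + axis b v)"
  have AB: "rpartial a f (y + axis b s + axis a u) - rpartial a f (y + axis a u) = s * X"
    using eq2 unfolding X_def by (simp add: algebra_simps)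
  have "f (y + axis a s + axis b s) - f (y + axis a s) - f (y + axis b s) + f y
      = s * (rpartial a f (y + axis b s + axis a u) - rpartial a f (y + axis a u))"
    using eq1 by (simp add: axis_zero_real algebra_simps)
  also have "\<dots> = s * (s * X)" using AB by simp
  finally have "f (y + axis a s + axis b s) - f (y + axis a s) - f (y + axis b s) + f y
      = s * (s * rpartial b (rpartial a f) ((y + axis a u) + axis b v))" unfolding X_def .
  then show ?thesis using u v by (auto simp: power2_eq_square)
qed

lemma clairaut:
  assumes "open U" "y \<in> U"
    and hf: "\<And>x i. x \<in> U \<Longrightarrow> hp f x i"
    and hfa: "\<And>x i. x \<in> U \<Longrightarrow> hp (rpartial a f) x i"
    and hfb: "\<And>x i. x \<in> U \<Longrightarrow> hp (rpartial b f) x i"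
    and ca: "continuous_on U (rpartial b (rpartial a f))"
    and cb: "continuous_on U (rpartial a (rpartial b f))"
  shows "rpartial a (rpartial b f) y = rpartial b (rpartial a f) y"
proof (rule ccontr)
  define c1 where "c1 = rpartial b (rpartial a f) y"
  define c2 where "c2 = rpartial a (rpartial b f) y"
  assume "c2 \<noteq> c1"
  then have e: "\<bar>c1 - c2\<bar> / 2 > 0" by (simp add: c1_def c2_def)
  define e where "e = \<bar>c1 - c2\<bar> / 2"
  obtain d1 where d1: "d1 > 0" "\<And>x. x \<in> U \<Longrightarrow> dist x y < d1 \<Longrightarrow> dist (rpartial b (rpartial a f) x) c1 < e"
    using ca e assms(2) unfolding continuous_on_iff c1_def e_def by metis
  obtain d2 where d2: "d2 > 0" "\<And>x. x \<in> U \<Longrightarrow> dist x y < d2 \<Longrightarrow> dist (rpartial a (rpartial b f) x) c2 < e"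
    using cb e assms(2) unfolding continuous_on_iff c2_def e_def by metis
  obtain r where r: "r > 0" "ball y r \<subseteq> U" using assms(1,2) open_contains_ball by blast
  define s where "s = min r (min d1 d2) / 4"
  have s: "s > 0" using r d1 d2 by (simp add: s_def)
  have near: "dist (y + axis a u + axis b v) y < min r (min d1 d2)" if "0 \<le> u" "u \<le> s" "0 \<le> v" "v \<le> s" for u v
  proof -
    have "dist (y + axis a u + axis b v) y = norm (axis a u + axis b v)" by (simp add: dist_norm)
    also have "\<dots> \<le> norm (axis a u) + norm (axis b v)" by (rule norm_triangle_ineq)
    also have "\<dots> \<le> 2 * s" using that by (simp add: norm_axis_real)
    also have "\<dots> < min r (min d1 d2)"
    proof -
      have m: "0 < min r (min d1 d2)" using r d1 d2 by simp
      show ?thesis unfolding s_def using m by linarith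
    qed
    finally show ?thesis .
  qed
  have sq1: "y + axis a u + axis b v \<in> U" if "0 \<le> u" "u \<le> s" "0 \<le> v" "v \<le> s" for u v
    using near[OF that] r by (auto simp: dist_commute)
  have sq2: "y + axis b v + axis a u \<in> U" if "0 \<le> v" "v \<le> s" "0 \<le> u" "u \<le> s" for u v
    using sq1[OF that(3,4,1,2)] by (simp add: algebra_simps)
  obtain u v where uv: "0 < u" "u < s" "0 < v" "v < s"
    and E1: "f (y + axis a s + axis b s) - f (y + axis a s) - f (y + axis b s) + f y
       = s\<^sup>2 * rpartial b (rpartial a f) (y + axis a u + axis b v)"
    using dd[OF s sq1 hf hfa] by blast
  obtain u' v' where uv': "0 < u'" "u' < s" "0 < v'" "v' < s"
    and E2: "f (y + axis b s + axis a s) - f (y + axis b s) - f (y + axis a s) + f y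
       = s\<^sup>2 * rpartial a (rpartial b f) (y + axis b u' + axis a v')"
    using dd[OF s sq2 hf hfb] by blast
  have "s\<^sup>2 * rpartial b (rpartial a f) (y + axis a u + axis b v) = s\<^sup>2 * rpartial a (rpartial b f) (y + axis b u' + axis a v')"
    using E1 E2 by (simp add: algebra_simps)
  then have eq: "rpartial b (rpartial a f) (y + axis a u + axis b v) = rpartial a (rpartial b f) (y + axis a v' + axis b u')"
    using s by (simp add: algebra_simps)
  have 1: "dist (rpartial b (rpartial a f) (y + axis a u + axis b v)) c1 < e"
    using d1(2)[OF sq1] near uv by auto
  have 2: "dist (rpartial a (rpartial b f) (y + axis a v' + axis b u')) c2 < e"
    using d2(2)[OF sq1] near uv' by auto
  from 1 2 eq have "\<bar>c1 - c2\<bar> < 2 * e" by (simp add: dist_real_def)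
  then show False by (simp add: e_def)
qed




lemma inv_props:
  fixes A :: "real^'n::finite^'n"
  assumes "det A \<noteq> 0"
  shows "A ** matrix_inv A = mat 1 \<and> matrix_inv A ** A = mat 1"
proof -
  have "invertible A" using assms invertible_det_nz by blast
  then have "\<exists>A'. A ** A' = mat 1 \<and> A' ** A = mat 1" unfolding invertible_def .
  then show ?thesis unfolding matrix_inv_def by (rule someI_ex)
qed

lemma inv_unique:
  fixes A B :: "'a::field^'n::finite^'n"
  assumes "A ** B = mat 1" "B ** A = mat 1"
  shows "matrix_inv A = B"
proof -
  have ex: "\<exists>A'. A ** A' = mat 1 \<and> A' ** A = mat 1" using assms by blast
  have C: "A ** matrix_inv A = mat 1" "matrix_inv A ** A = mat 1"
    using someI_ex[OF ex] unfolding matrix_inv_def by auto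
  have "matrix_inv A = (B ** A) ** matrix_inv A" using assms by simp
  also have "\<dots> = B ** (A ** matrix_inv A)" by (simp add: matrix_mul_assoc)
  also have "\<dots> = B" using C by simp
  finally show ?thesis .
qed

lemma det_deriv_raw:
  fixes F :: "real \<Rightarrow> real^'n::finite^'n"
  assumes "\<And>a b. ((\<lambda>t. F t $ a $ b) has_real_derivative F' $ a $ b) (at t0)"
  shows "((\<lambda>t. det (F t)) has_real_derivative
     (\<Sum>k\<in>UNIV. det (\<chi> i. if i = k then F' $ i else F t0 $ i))) (at t0)"
proof -
  let ?P = "{p. p permutes (UNIV::'n set)}"
  have "((\<lambda>t. det (F t)) has_real_derivative
     (\<Sum>p\<in>?P. of_int (sign p) * (\<Sum>k\<in>UNIV. F' $ k $ p k * (\<Prod>i\<in>UNIV - {k}. F t0 $ i $ p i)))) (at t0)"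
    unfolding det_def
    by (intro DERIV_sum DERIV_cmult has_field_derivative_prod assms)
  moreover have "(\<Sum>p\<in>?P. of_int (sign p) * (\<Sum>k\<in>UNIV. F' $ k $ p k * (\<Prod>i\<in>UNIV - {k}. F t0 $ i $ p i)))
      = (\<Sum>k\<in>UNIV. det (\<chi> i. if i = k then F' $ i else F t0 $ i))"
  proof -
    have "(\<Sum>p\<in>?P. of_int (sign p) * (\<Sum>k\<in>UNIV. F' $ k $ p k * (\<Prod>i\<in>UNIV - {k}. F t0 $ i $ p i)))
      = (\<Sum>p\<in>?P. \<Sum>k\<in>UNIV. of_int (sign p) * (F' $ k $ p k * (\<Prod>i\<in>UNIV - {k}. F t0 $ i $ p i)))"
      by (simp add: sum_distrib_left)
    also have "\<dots> = (\<Sum>k\<in>UNIV. \<Sum>p\<in>?P. of_int (sign p) * (F' $ k $ p k * (\<Prod>i\<in>UNIV - {k}. F t0 $ i $ p i)))"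
      by (rule sum.swap)
    also have "\<dots> = (\<Sum>k\<in>UNIV. det (\<chi> i. if i = k then F' $ i else F t0 $ i))"
    proof (rule sum.cong[OF refl])
      fix k :: 'n
      show "(\<Sum>p\<in>?P. of_int (sign p) * (F' $ k $ p k * (\<Prod>i\<in>UNIV - {k}. F t0 $ i $ p i)))
          = det (\<chi> i. if i = k then F' $ i else F t0 $ i)"
        unfolding det_def
      proof (rule sum.cong[OF refl])
        fix p
        have "(\<Prod>i\<in>UNIV. (\<chi> i. if i = k then F' $ i else F t0 $ i) $ i $ p i)
            = (\<chi> i. if i = k then F' $ i else F t0 $ i) $ k $ p k *
              (\<Prod>i\<in>UNIV - {k}. (\<chi> i. if i = k then F' $ i else F t0 $ i) $ i $ p i)"
          by (rule prod.remove) auto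
        also have "\<dots> = F' $ k $ p k * (\<Prod>i\<in>UNIV - {k}. F t0 $ i $ p i)"
          by (auto intro!: prod.cong)
        finally show "of_int (sign p) * (F' $ k $ p k * (\<Prod>i\<in>UNIV - {k}. F t0 $ i $ p i))
          = of_int (sign p) * (\<Prod>i\<in>UNIV. (\<chi> i. if i = k then F' $ i else F t0 $ i) $ i $ p i)"
          by simp
      qed
    qed
    finally show ?thesis .
  qed
  ultimately show ?thesis by simp
qed

lemma det_row_replace:
  fixes A :: "real^'n::finite^'n"
  assumes "det A \<noteq> 0"
  shows "det (\<chi> i. if i = k then r else A $ i) = det A * (\<Sum>j\<in>UNIV. r $ j * matrix_inv A $ j $ k)"
proof -
  have rsum: "r = (\<Sum>j\<in>UNIV. r $ j *s axis j 1)" by (simp add: basis_expansion)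
  have "det (\<chi> i. if i = k then r else A $ i) = det (\<chi> i. if i = k then (\<Sum>j\<in>UNIV. r $ j *s axis j 1) else A $ i)"
    by (simp only: rsum[symmetric])
  also have "\<dots> = (\<Sum>j\<in>UNIV. det (\<chi> i. if i = k then r $ j *s axis j 1 else A $ i))"
    by (rule det_linear_row_sum) simp
  also have "\<dots> = (\<Sum>j\<in>UNIV. r $ j * det (\<chi> i. if i = k then axis j 1 else A $ i))"
    by (simp add: det_row_mul)
  also have "\<dots> = (\<Sum>j\<in>UNIV. r $ j * (det A * matrix_inv A $ j $ k))"
  proof (rule sum.cong[OF refl])
    fix j
    let ?x = "row j (matrix_inv A)"
    have I: "matrix_inv A ** A = mat 1" using inv_props[OF assms] by simp
    have "(\<Sum>i\<in>UNIV. ?x $ i *s row i A) = (matrix_inv A ** A) $ j"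
      by (simp add: vec_eq_iff row_def matrix_matrix_mult_def sum_component)
    also have "\<dots> = axis j 1" using I by (simp add: mat_def axis_def vec_eq_iff)
    finally have S: "(\<Sum>i\<in>UNIV. ?x $ i *s row i A) = axis j 1" .
    have rA: "(\<chi> i. if i = k then axis j 1 else A $ i) = (\<chi> i. if i = k then axis j 1 else row i A)"
      by (simp add: row_def vec_eq_iff)
    have "det (\<chi> i. if i = k then axis j 1 else A $ i) = ?x $ k * det A"
      using cramer_lemma_transpose[of k ?x A] unfolding S rA .
    then show "r $ j * det (\<chi> i. if i = k then axis j 1 else A $ i) = r $ j * (det A * matrix_inv A $ j $ k)"
      by (simp add: row_def)
  qed
  also have "\<dots> = det A * (\<Sum>j\<in>UNIV. r $ j * matrix_inv A $ j $ k)"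
    by (simp add: sum_distrib_left algebra_simps)
  finally show ?thesis .
qed

lemma jacobi:
  fixes F :: "real \<Rightarrow> real^'n::finite^'n"
  assumes "\<And>a b. ((\<lambda>t. F t $ a $ b) has_real_derivative F' $ a $ b) (at t0)"
    and "det (F t0) \<noteq> 0"
  shows "((\<lambda>t. det (F t)) has_real_derivative
     det (F t0) * (\<Sum>a\<in>UNIV. \<Sum>b\<in>UNIV. matrix_inv (F t0) $ b $ a * F' $ a $ b)) (at t0)"
proof -
  have "(\<Sum>k\<in>UNIV. det (\<chi> i. if i = k then F' $ i else F t0 $ i))
     = (\<Sum>k\<in>UNIV. det (\<chi> i. if i = k then F' $ k else F t0 $ i))"
    by (intro sum.cong refl arg_cong[where f=det]) (auto simp: vec_eq_iff)
  also have "\<dots> = (\<Sum>k\<in>UNIV. det (F t0) * (\<Sum>j\<in>UNIV. F' $ k $ j * matrix_inv (F t0) $ j $ k))"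
    by (simp add: det_row_replace assms(2))
  also have "\<dots> = det (F t0) * (\<Sum>a\<in>UNIV. \<Sum>b\<in>UNIV. matrix_inv (F t0) $ b $ a * F' $ a $ b)"
    by (simp add: sum_distrib_left mult.commute)
  finally show ?thesis using det_deriv_raw[OF assms(1)] by simp
qed


lemma inv_cramer:
  fixes A :: "real^'n::finite^'n"
  assumes "det A \<noteq> 0"
  shows "matrix_inv A $ a $ b = det (\<chi> i m. if m = a then axis b 1 $ i else A $ i $ m) / det A"
proof -
  have "A *v (matrix_inv A *v axis b 1) = axis b 1"
    using inv_props[OF assms] by (simp add: matrix_vector_mul_assoc)
  then have "matrix_inv A *v axis b 1 = (\<chi> k. det (\<chi> i j. if j = k then axis b 1 $ i else A $ i $ j) / det A)"
    using cramer[OF assms] by blast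
  then have "(matrix_inv A *v axis b 1) $ a = det (\<chi> i m. if m = a then axis b 1 $ i else A $ i $ m) / det A"
    by simp
  moreover have "(matrix_inv A *v axis b 1) $ a = matrix_inv A $ a $ b"
    by (simp add: matrix_vector_mult_def axis_def if_distrib cong: if_cong)
  ultimately show ?thesis by simp
qed

lemma ev_det_nz:
  fixes F :: "real \<Rightarrow> real^'n::finite^'n"
  assumes "\<And>a b. ((\<lambda>t. F t $ a $ b) has_real_derivative F' $ a $ b) (at t0)"
    and "det (F t0) \<noteq> 0"
  shows "eventually (\<lambda>t. det (F t) \<noteq> 0) (nhds t0)"
proof -
  have "isCont (\<lambda>t. det (F t)) t0"
    using jacobi[OF assms] by (rule DERIV_isCont)
  then have "((\<lambda>t. det (F t)) \<longlongrightarrow> det (F t0)) (nhds t0)"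
    unfolding isCont_def by (rule tendsto_at_iff_tendsto_nhds[THEN iffD1])
  then show ?thesis using assms(2) by (rule tendsto_imp_eventually_ne)
qed

lemma inv_entry_has_deriv:
  fixes F :: "real \<Rightarrow> real^'n::finite^'n"
  assumes d: "\<And>a b. ((\<lambda>t. F t $ a $ b) has_real_derivative F' $ a $ b) (at t0)"
    and nz: "det (F t0) \<noteq> 0"
  shows "\<exists>X. ((\<lambda>t. matrix_inv (F t) $ a $ b) has_real_derivative X) (at t0)"
proof -
  define C where "C t = (\<chi> i m. if m = a then axis b 1 $ i else F t $ i $ m)" for t
  define C' where "C' = (\<chi> i m. if m = a then 0 else F' $ i $ m)"
  have dC: "((\<lambda>t. C t $ i $ m) has_real_derivative C' $ i $ m) (at t0)" for i m
    by (cases "m = a") (simp_all add: C_def C'_def d)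
  obtain N' where N': "((\<lambda>t. det (C t)) has_real_derivative N') (at t0)"
    using det_deriv_raw[OF dC] by blast
  obtain D' where D': "((\<lambda>t. det (F t)) has_real_derivative D') (at t0)"
    using det_deriv_raw[OF d] by blast
  have q: "((\<lambda>t. det (C t) / det (F t)) has_real_derivative
     (N' * det (F t0) - det (C t0) * D') / (det (F t0) * det (F t0))) (at t0)"
    by (rule DERIV_divide[OF N' D' nz])
  have ev: "eventually (\<lambda>t. det (C t) / det (F t) = matrix_inv (F t) $ a $ b) (nhds t0)"
    using ev_det_nz[OF d nz] by (rule eventually_mono) (simp add: inv_cramer C_def)
  show ?thesis using q DERIV_cong_ev[OF refl ev refl] by blast
qed

lemma inv_deriv:
  fixes F :: "real \<Rightarrow> real^'n::finite^'n"
  assumes d: "\<And>a b. ((\<lambda>t. F t $ a $ b) has_real_derivative F' $ a $ b) (at t0)"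
    and nz: "det (F t0) \<noteq> 0"
  shows "((\<lambda>t. matrix_inv (F t) $ a $ b) has_real_derivative
      - ((matrix_inv (F t0) ** F') ** matrix_inv (F t0)) $ a $ b) (at t0)"
proof -
  define X where "X = (\<chi> a b. SOME X. ((\<lambda>t. matrix_inv (F t) $ a $ b) has_real_derivative X) (at t0))"
  have dX: "((\<lambda>t. matrix_inv (F t) $ a $ b) has_real_derivative X $ a $ b) (at t0)" for a b
    unfolding X_def using someI_ex[OF inv_entry_has_deriv[OF d nz, of a b]] by simp
  define A where "A = F t0"
  define I where "I = matrix_inv A"
  have zero: "(F' ** I + A ** X) $ a $ b = 0" for a b
  proof -
    have D1: "((\<lambda>t. \<Sum>m\<in>UNIV. F t $ a $ m * matrix_inv (F t) $ m $ b) has_real_derivative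
        (\<Sum>m\<in>UNIV. F' $ a $ m * I $ m $ b + A $ a $ m * X $ m $ b)) (at t0)"
      unfolding A_def I_def
      by (intro DERIV_sum) (auto intro!: derivative_eq_intros d dX)
    have ev: "eventually (\<lambda>t. (\<Sum>m\<in>UNIV. F t $ a $ m * matrix_inv (F t) $ m $ b) = mat 1 $ a $ b) (nhds t0)"
      using ev_det_nz[OF d nz]
    proof (rule eventually_mono)
      fix t assume "det (F t) \<noteq> 0"
      then have "F t ** matrix_inv (F t) = mat 1" using inv_props by blast
      then have "(F t ** matrix_inv (F t)) $ a $ b = mat 1 $ a $ b" by simp
      then show "(\<Sum>m\<in>UNIV. F t $ a $ m * matrix_inv (F t) $ m $ b) = mat 1 $ a $ b"
        by (simp add: matrix_matrix_mult_def)
    qed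
    have D2: "((\<lambda>t. \<Sum>m\<in>UNIV. F t $ a $ m * matrix_inv (F t) $ m $ b) has_real_derivative 0) (at t0)"
      using DERIV_cong_ev[OF refl ev refl] DERIV_const by blast
    have "(\<Sum>m\<in>UNIV. F' $ a $ m * I $ m $ b + A $ a $ m * X $ m $ b) = 0"
      using DERIV_unique[OF D1 D2] .
    then show ?thesis by (simp add: matrix_matrix_mult_def sum.distrib)
  qed
  then have Z: "F' ** I + A ** X = 0" by (simp add: vec_eq_iff)
  have IA: "I ** A = mat 1" unfolding I_def A_def using inv_props[OF nz] by simp
  have "I ** (F' ** I + A ** X) = 0" unfolding Z by (simp add: matrix_matrix_mult_def vec_eq_iff)
  then have "(I ** F') ** I + X = 0"
    by (simp add: matrix_add_ldistrib matrix_mul_assoc IA)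
  then have "X = - ((I ** F') ** I)" by (simp add: add_eq_0_iff)
  then show ?thesis using dX[of a b] unfolding I_def A_def by simp
qed




lemma hess_entry: "hess_metric h x $ a $ b = iter_partial [a,b] h x"
  by (simp add: hess_metric_def)

lemma posdef_det:
  fixes A :: "real^'n::finite^'n"
  assumes "pos_def A"
  shows "det A \<noteq> 0"
proof
  assume "det A = 0"
  then have "\<not> invertible A" using invertible_det_nz by blast
  then have "\<not> (\<exists>B. B ** A = mat 1)" using invertible_left_inverse by blast
  then obtain x where x: "A *v x = 0" "x \<noteq> 0" using matrix_left_invertible_ker by blast
  have "(\<Sum>i\<in>UNIV. \<Sum>j\<in>UNIV. x$i * A$i$j * x$j) = (\<Sum>i\<in>UNIV. x$i * (A *v x) $ i)"
    by (simp add: matrix_vector_mult_def sum_distrib_left mult.assoc)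
  also have "\<dots> = 0" using x by simp
  finally show False using assms x unfolding pos_def_def by auto
qed

lemma G_deriv:
  assumes "smooth_on U h" "x \<in> U"
  shows "((\<lambda>t. hess_metric h (x + axis k t) $ a $ b) has_real_derivative
     (\<chi> a b. rpartial k (iter_partial [a,b] h) x) $ a $ b) (at 0)"
  unfolding hess_entry using hp_deriv0[OF smooth_hp[OF assms, of "[a,b]" k]] by simp

lemma sqrt_ratio:
  assumes "(D::real) \<noteq> 0"
    and "D > 0 \<Longrightarrow> S = inverse (sqrt D) / 2" and "D < 0 \<Longrightarrow> S = - inverse (sqrt D) / 2"
  shows "S * (D * T) / sqrt D = T / 2"
proof -
  define s where "s = sqrt D"
  have s0: "s \<noteq> 0" using assms(1) by (simp add: s_def)
  show ?thesis
  proof (cases "D > 0")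
    case True
    have Dss: "D = s * s" using True by (simp add: s_def)
    have "S = inverse s / 2" using assms(2)[OF True] by (simp add: s_def)
    then have "S * s = (inverse s * s) / 2" by simp
    also have "inverse s * s = 1" using s0 by simp
    finally have Ss: "S * s = 1 / 2" by simp
    have "S * (D * T) / s = (S * s) * T" using s0 by (simp add: Dss)
    then show ?thesis unfolding s_def[symmetric] using Ss by simp
  next
    case False
    then have D: "D < 0" using assms(1) by simp
    have Dss: "D = - (s * s)" using D by (simp add: s_def)
    have "S = - inverse s / 2" using assms(3)[OF D] by (simp add: s_def)
    then have "S * s = - (inverse s * s) / 2" by simp
    also have "inverse s * s = 1" using s0 by simp
    finally have Ss: "S * s = - 1 / 2" by simp
    have "S * (D * T) / s = - (S * s) * T" using s0 by (simp add: Dss)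
    then show ?thesis unfolding s_def[symmetric] using Ss by simp
  qed
qed

lemma alpha_eq:
  assumes "open U" "smooth_on U h" "\<forall>y\<in>U. pos_def (hess_metric h y)" "x \<in> U"
  shows "koszul_alpha h i x = (\<Sum>a\<in>UNIV. \<Sum>b\<in>UNIV. matrix_inv (hess_metric h x) $ b $ a
             * rpartial i (iter_partial [a,b] h) x) / 2"
proof -
  define D where "D = det (hess_metric h x)"
  define T where "T = (\<Sum>a\<in>UNIV. \<Sum>b\<in>UNIV. matrix_inv (hess_metric h x) $ b $ a
             * rpartial i (iter_partial [a,b] h) x)"
  have nz: "D \<noteq> 0" unfolding D_def using posdef_det assms(3,4) by blast
  have J: "((\<lambda>t. det (hess_metric h (x + axis i t))) has_real_derivative D * T) (at 0)"
    using jacobi[of "\<lambda>t. hess_metric h (x + axis i t)" _ 0,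
        OF G_deriv[OF assms(2,4)]] nz unfolding D_def T_def by (simp add: axis_zero_real)
  define S where "S = (if D > 0 then inverse (sqrt D) / 2 else - inverse (sqrt D) / 2)"
  have Sd: "DERIV sqrt D :> S" unfolding S_def by (rule DERIV_real_sqrt_generic) (use nz in auto)
  have "((\<lambda>t. sqrt (det (hess_metric h (x + axis i t)))) has_real_derivative S * (D * T)) (at 0)"
    using DERIV_chain'[OF J, of sqrt S] Sd unfolding D_def by (simp add: axis_zero_real)
  then have "rpartial i (vol_coeff h) x = S * (D * T)"
    unfolding rpartial_def vol_coeff_def by (rule DERIV_imp_deriv)
  moreover have "vol_coeff h x = sqrt D" by (simp add: vol_coeff_def D_def)
  ultimately have "koszul_alpha h i x = S * (D * T) / sqrt D" by (simp add: koszul_alpha_def)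
  also have "\<dots> = T / 2" by (rule sqrt_ratio) (use nz in \<open>auto simp: S_def\<close>)
  finally show ?thesis unfolding T_def .
qed

lemma beta_eq:
  assumes "open U" "smooth_on U h" "\<forall>y\<in>U. pos_def (hess_metric h y)" "y \<in> U"
  shows "koszul_beta h i j y =
    (\<Sum>a\<in>UNIV. \<Sum>b\<in>UNIV.
       - ((matrix_inv (hess_metric h y) ** (\<chi> a b. rpartial j (iter_partial [a,b] h) y)) ** matrix_inv (hess_metric h y)) $ b $ a
           * rpartial i (iter_partial [a,b] h) y
       + matrix_inv (hess_metric h y) $ b $ a * rpartial j (rpartial i (iter_partial [a,b] h)) y) / 2"
proof -
  define T where "T x = (\<Sum>a\<in>UNIV. \<Sum>b\<in>UNIV. matrix_inv (hess_metric h x) $ b $ a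
             * rpartial i (iter_partial [a,b] h) x) / 2" for x
  have "koszul_beta h i j y = rpartial j T y"
    unfolding koszul_beta_def T_def
    by (rule rpartial_local[OF assms(1,4)]) (use alpha_eq[OF assms(1-3)] in auto)
  moreover
  have nz: "det (hess_metric h y) \<noteq> 0" using posdef_det assms(3,4) by blast
  have "((\<lambda>t. T (y + axis j t)) has_real_derivative
    (\<Sum>a\<in>UNIV. \<Sum>b\<in>UNIV.
       - ((matrix_inv (hess_metric h y) ** (\<chi> a b. rpartial j (iter_partial [a,b] h) y)) ** matrix_inv (hess_metric h y)) $ b $ a
           * rpartial i (iter_partial [a,b] h) y
       + matrix_inv (hess_metric h y) $ b $ a * rpartial j (rpartial i (iter_partial [a,b] h)) y) / 2) (at 0)"
    unfolding T_def
  proof (intro DERIV_cdivide DERIV_sum)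
    fix a b
    have d1: "((\<lambda>t. matrix_inv (hess_metric h (y + axis j t)) $ b $ a) has_real_derivative
       - ((matrix_inv (hess_metric h y) ** (\<chi> a b. rpartial j (iter_partial [a,b] h) y)) ** matrix_inv (hess_metric h y)) $ b $ a) (at 0)"
      using inv_deriv[of "\<lambda>t. hess_metric h (y + axis j t)" _ 0, OF G_deriv[OF assms(2,4)]] nz
      by (simp add: axis_zero_real)
    have d2: "((\<lambda>t. rpartial i (iter_partial [a,b] h) (y + axis j t)) has_real_derivative
        rpartial j (rpartial i (iter_partial [a,b] h)) y) (at 0)"
      using hp_deriv0[OF smooth_hp[OF assms(2,4), of "[i,a,b]" j]] by simp
    show "((\<lambda>t. matrix_inv (hess_metric h (y + axis j t)) $ b $ a * rpartial i (iter_partial [a, b] h) (y + axis j t))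
       has_real_derivative
       - ((matrix_inv (hess_metric h y) ** (\<chi> a b. rpartial j (iter_partial [a,b] h) y)) ** matrix_inv (hess_metric h y)) $ b $ a
           * rpartial i (iter_partial [a,b] h) y
       + matrix_inv (hess_metric h y) $ b $ a * rpartial j (rpartial i (iter_partial [a,b] h)) y) (at 0)"
      using DERIV_mult'[OF d1 d2] by (simp add: axis_zero_real)
  qed
  then have "rpartial j T y = (\<Sum>a\<in>UNIV. \<Sum>b\<in>UNIV.
       - ((matrix_inv (hess_metric h y) ** (\<chi> a b. rpartial j (iter_partial [a,b] h) y)) ** matrix_inv (hess_metric h y)) $ b $ a
           * rpartial i (iter_partial [a,b] h) y
       + matrix_inv (hess_metric h y) $ b $ a * rpartial j (rpartial i (iter_partial [a,b] h)) y) / 2"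
    unfolding rpartial_def by (rule DERIV_imp_deriv)
  ultimately show ?thesis by simp
qed




lemma re_vec_add_re: "re_vec (z + axis k (complex_of_real t)) = re_vec z + axis k t"
  by (simp add: re_vec_def axis_def vec_eq_iff)

lemma re_vec_add_im: "re_vec (z + axis k (\<i> * complex_of_real t)) = re_vec z"
  by (simp add: re_vec_def axis_def vec_eq_iff)

lemma re_vec_cvec: "re_vec (cvec y \<xi>) = y"
  by (simp add: re_vec_def cvec_def vec_eq_iff)

lemma cderiv_parts:
  assumes "open U" "re_vec z \<in> U"
    and F: "\<And>w. re_vec w \<in> U \<Longrightarrow> F w = c * complex_of_real (f (re_vec w))"
    and hp: "hp f (re_vec z) k"
  shows "dRe k F z = c * complex_of_real (rpartial k f (re_vec z))" "dIm k F z = 0"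
proof -
  define y where "y = re_vec z"
  have "(\<lambda>t. F (z + axis k (\<i> * complex_of_real t))) = (\<lambda>t. c * complex_of_real (f y))"
    using F assms(2) by (simp add: re_vec_add_im y_def)
  then show "dIm k F z = 0" unfolding dIm_def by simp
  obtain r where r: "r > 0" "ball y r \<subseteq> U" using assms(1,2) open_contains_ball y_def by blast
  have d: "((\<lambda>t. f (y + axis k t) *\<^sub>R c) has_vector_derivative (rpartial k f y *\<^sub>R c)) (at 0)"
    using has_vector_derivative_scaleR[OF hp_deriv0[OF hp[folded y_def]] has_vector_derivative_const[of c]]
    by simp
  have "((\<lambda>t. F (z + axis k (complex_of_real t))) has_vector_derivative (rpartial k f y *\<^sub>R c)) (at 0)"
  proof (rule has_vector_derivative_transform_within[OF d r(1)])
    fix t :: real assume "dist t 0 < r"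
    then have "y + axis k t \<in> U" using r by (auto simp: dist_norm norm_axis_real)
    then show "f (y + axis k t) *\<^sub>R c = F (z + axis k (complex_of_real t))"
      using F[of "z + axis k (complex_of_real t)"] by (simp add: re_vec_add_re y_def scaleR_conv_of_real)
  qed simp
  then show "dRe k F z = c * complex_of_real (rpartial k f (re_vec z))"
    unfolding dRe_def y_def by (simp add: vector_derivative_at scaleR_conv_of_real mult.commute)
qed

lemma cderiv:
  assumes "open U" "re_vec z \<in> U"
    and F: "\<And>w. re_vec w \<in> U \<Longrightarrow> F w = c * complex_of_real (f (re_vec w))"
    and hp: "hp f (re_vec z) k"
  shows "dz k F z = c * complex_of_real (rpartial k f (re_vec z)) / 2"
    "dzb k F z = c * complex_of_real (rpartial k f (re_vec z)) / 2"
  using cderiv_parts[OF assms] by (simp_all add: dz_def dzb_def)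




lemma cmat_mult:
  fixes P Q :: "real^'n::finite^'n"
  shows "(\<chi> a b. complex_of_real (P$a$b)) ** (\<chi> a b. complex_of_real (Q$a$b))
     = (\<chi> a b. complex_of_real ((P ** Q)$a$b))"
  by (simp add: matrix_matrix_mult_def vec_eq_iff)

lemma cmat_one: "(\<chi> a b. complex_of_real ((mat 1 :: real^'n::finite^'n)$a$b)) = mat 1"
  by (simp add: mat_def vec_eq_iff)

lemma kc_inv:
  assumes "det (hess_metric h y) \<noteq> 0"
  shows "matrix_inv (kahler_coeff h (cvec y \<xi>)) = (\<chi> a b. complex_of_real (matrix_inv (hess_metric h y) $ a $ b))"
proof -
  have kc: "kahler_coeff h (cvec y \<xi>) = (\<chi> a b. complex_of_real (hess_metric h y $ a $ b))"
    by (simp add: kahler_coeff_def re_vec_cvec)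
  show ?thesis unfolding kc
    by (rule inv_unique) (simp_all add: cmat_mult inv_props[OF assms] cmat_one)
qed

lemma kc_entry: "kahler_coeff h w $ a $ b = 1 * complex_of_real (iter_partial [a,b] h (re_vec w))"
  by (simp add: kahler_coeff_def hess_entry)

lemma sum4_swap:
  fixes T :: "'n::finite \<Rightarrow> 'n \<Rightarrow> 'n \<Rightarrow> 'n \<Rightarrow> real"
  shows "(\<Sum>a\<in>UNIV. \<Sum>b\<in>UNIV. \<Sum>p\<in>UNIV. \<Sum>q\<in>UNIV. T a q b p)
       = (\<Sum>a\<in>UNIV. \<Sum>b\<in>UNIV. \<Sum>q\<in>UNIV. \<Sum>p\<in>UNIV. T a b q p)"
proof -
  have "(\<Sum>a\<in>UNIV. \<Sum>b\<in>UNIV. \<Sum>p\<in>UNIV. \<Sum>q\<in>UNIV. T a q b p)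
      = (\<Sum>a\<in>UNIV. \<Sum>b\<in>UNIV. \<Sum>q\<in>UNIV. \<Sum>p\<in>UNIV. T a q b p)"
    by (rule sum.cong[OF refl], rule sum.cong[OF refl], rule sum.swap)
  also have "\<dots> = (\<Sum>a\<in>UNIV. \<Sum>q\<in>UNIV. \<Sum>b\<in>UNIV. \<Sum>p\<in>UNIV. T a q b p)"
    by (rule sum.cong[OF refl], rule sum.swap)
  finally show ?thesis .
qed

theorem proposition9:
  fixes h :: "real^'q::finite \<Rightarrow> real" and U :: "(real^'q) set"
  assumes "open U"
    and "smooth_on U h"
    and "\<forall>y\<in>U. pos_def (hess_metric h y)"
    and "y \<in> U"
  shows "kahler_ricci (kahler_coeff h) i j (cvec y \<xi>)
           = - (1/2) * complex_of_real (koszul_beta h i j y)"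
proof -
  define z where "z = cvec y \<xi>"
  have zy: "re_vec z = y" by (simp add: z_def re_vec_cvec)
  have zU: "re_vec z \<in> U" using zy assms(4) by simp
  define A where "A = hess_metric h y"
  define I where "I = matrix_inv A"
  define g where "g a b = iter_partial [a,b] h" for a b
  define Fi where "Fi a b = rpartial i (g a b) y" for a b
  define Fj where "Fj a b = rpartial j (g a b) y" for a b
  define Hij where "Hij a b = rpartial i (rpartial j (g a b)) y" for a b
  have nz: "det A \<noteq> 0" unfolding A_def using posdef_det assms(3,4) by blast
  have K2: "matrix_inv (kahler_coeff h z) = (\<chi> a b. complex_of_real (I $ a $ b))"
    unfolding z_def I_def A_def using kc_inv nz A_def by blast
  have K3: "dz i (\<lambda>w. kahler_coeff h w $ a $ q) z = complex_of_real (Fi a q) / 2" for a q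
    using cderiv(1)[OF assms(1) zU kc_entry smooth_hp[OF assms(2) zU]] by (simp add: zy Fi_def g_def)
  have K4: "dzb j (\<lambda>w. kahler_coeff h w $ p $ b) z = complex_of_real (Fj p b) / 2" for p b
    using cderiv(2)[OF assms(1) zU kc_entry smooth_hp[OF assms(2) zU]] by (simp add: zy Fj_def g_def)
  have K5: "dzb j (\<lambda>w. kahler_coeff h w $ a $ b) w = (1/2) * complex_of_real (rpartial j (g a b) (re_vec w))"
    if "re_vec w \<in> U" for a b w
    using cderiv(2)[OF assms(1) that kc_entry smooth_hp[OF assms(2) that]] by (simp add: g_def)
  have K6: "dz i (dzb j (\<lambda>w. kahler_coeff h w $ a $ b)) z = (1/2) * complex_of_real (Hij a b) / 2" for a b
  proof -
    have hp: "hp (rpartial j (g a b)) (re_vec z) i"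
      using smooth_hp[OF assms(2) zU, of "[j,a,b]" i] by (simp add: g_def)
    show ?thesis using cderiv(1)[OF assms(1) zU K5 hp] by (simp add: zy Hij_def)
  qed
  define curvR where "curvR a b = - Hij a b / 4 + (\<Sum>p\<in>UNIV. \<Sum>q\<in>UNIV. I $ q $ p * Fi a q * Fj p b) / 4" for a b
  have curv: "kahler_curv (kahler_coeff h) a b i j z = complex_of_real (curvR a b)" for a b
    unfolding kahler_curv_def K2 K3 K4 K6 curvR_def
    by (simp add: of_real_sum sum_divide_distrib field_simps)
  have ric: "kahler_ricci (kahler_coeff h) i j z
      = complex_of_real (\<Sum>a\<in>UNIV. \<Sum>b\<in>UNIV. I $ b $ a * curvR a b)"
    unfolding kahler_ricci_def K2 curv by (simp add: of_real_sum)
  have beta: "koszul_beta h i j y = (\<Sum>a\<in>UNIV. \<Sum>b\<in>UNIV.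
       - ((I ** (\<chi> a b. Fj a b)) ** I) $ b $ a * Fi a b
       + I $ b $ a * rpartial j (rpartial i (g a b)) y) / 2"
    using beta_eq[OF assms] unfolding I_def A_def Fi_def Fj_def g_def by simp
  have clair: "rpartial j (rpartial i (g a b)) y = Hij a b" for a b
    unfolding Hij_def g_def
    by (rule clairaut[OF assms(1,4)])
       (auto intro: smooth_hp[OF assms(2), of _ "[a,b]", simplified]
          smooth_hp[OF assms(2), of _ "[i,a,b]", simplified]
          smooth_hp[OF assms(2), of _ "[j,a,b]", simplified]
          smooth_cont[OF assms(2), of "[i,j,a,b]", simplified]
          smooth_cont[OF assms(2), of "[j,i,a,b]", simplified])
  define T1 where "T1 a b q p = I$b$p * Fj p q * (I$q$a * Fi a b)" for a b q p
  have L: "((I ** (\<chi> a b. Fj a b)) ** I) $ b $ a * Fi a b = (\<Sum>q\<in>UNIV. \<Sum>p\<in>UNIV. T1 a b q p)" for a b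
    by (simp add: T1_def matrix_matrix_mult_def sum_distrib_right mult.assoc)
  have R: "I $ b $ a * (\<Sum>p\<in>UNIV. \<Sum>q\<in>UNIV. I $ q $ p * Fi a q * Fj p b) = (\<Sum>p\<in>UNIV. \<Sum>q\<in>UNIV. T1 a q b p)" for a b
    by (simp add: T1_def sum_distrib_left algebra_simps)
  have key: "(\<Sum>a\<in>UNIV. \<Sum>b\<in>UNIV. I $ b $ a * (\<Sum>p\<in>UNIV. \<Sum>q\<in>UNIV. I $ q $ p * Fi a q * Fj p b))
     = (\<Sum>a\<in>UNIV. \<Sum>b\<in>UNIV. ((I ** (\<chi> a b. Fj a b)) ** I) $ b $ a * Fi a b)"
    unfolding R L by (rule sum4_swap)
  define X where "X a b = (\<Sum>p\<in>UNIV. \<Sum>q\<in>UNIV. I $ q $ p * Fi a q * Fj p b)" for a b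
  define P where "P a b = ((I ** (\<chi> a b. Fj a b)) ** I) $ b $ a * Fi a b" for a b
  define Q where "Q a b = I $ b $ a * Hij a b" for a b
  have key': "(\<Sum>a\<in>UNIV. \<Sum>b\<in>UNIV. I $ b $ a * X a b) = (\<Sum>a\<in>UNIV. \<Sum>b\<in>UNIV. P a b)"
    using key unfolding X_def P_def .
  have c: "I $ b $ a * curvR a b = (I $ b $ a * X a b) / 4 - Q a b / 4" for a b
    unfolding curvR_def X_def[symmetric] Q_def by (simp add: algebra_simps)
  have b2: "- ((I ** (\<chi> a b. Fj a b)) ** I) $ b $ a * Fi a b + I $ b $ a * rpartial j (rpartial i (g a b)) y
       = - P a b + Q a b" for a b
    unfolding P_def Q_def clair by simp
  have real_eq: "(\<Sum>a\<in>UNIV. \<Sum>b\<in>UNIV. I $ b $ a * curvR a b) = - (1/2) * koszul_beta h i j y"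
  proof -
    have "(\<Sum>a\<in>UNIV. \<Sum>b\<in>UNIV. I $ b $ a * curvR a b)
       = (\<Sum>a\<in>UNIV. \<Sum>b\<in>UNIV. I $ b $ a * X a b) / 4 - (\<Sum>a\<in>UNIV. \<Sum>b\<in>UNIV. Q a b) / 4"
      unfolding c by (simp add: sum_subtractf sum_divide_distrib)
    moreover have "koszul_beta h i j y = (- (\<Sum>a\<in>UNIV. \<Sum>b\<in>UNIV. P a b) + (\<Sum>a\<in>UNIV. \<Sum>b\<in>UNIV. Q a b)) / 2"
      unfolding beta b2 by (simp add: sum_subtractf sum.distrib sum_negf)
    ultimately show ?thesis unfolding key' by simp
  qed
  show ?thesis unfolding z_def[symmetric] ric real_eq by simp
qed


end
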